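(* Let $s$ be a positive integer, let $\lambda,\eta,n$ be numbers, put $c(x)=\lambda x+\eta$, and let $h_{s,i,j}$ be as in the context. Then $$\sum_{i=0}^{s-1}c(n-i)^s\sum_{j'=i+1}^{s}h_{s,i,j'}+\sum_{i=s+1}^{2s}(-1)^s c(n-i)^s\sum_{j'=0}^{i-s-1}h_{s,2s-i,s-j'}=\Big[\frac1s\binom{2s}{s-1}-1\Big]\lambda^s(s+1)!.$$
   Context: For a fixed positive integer $s$, the numbers $h_{s,i,j}$ (integers $i\ge 0$, $j$) are defined recursively by: $h_{s,i,j}=0$ if $j\le i$; for $i=0$ and $j\ge 1$, $h_{s,0,j}=\binom{s+j-1}{j}\frac{s-j}{s}$; for $i>0$ and $j>i$, $h_{s,i,j}=-\frac{s-j+1}{i}h_{s,i-1,j-1}-\frac{j-i}{i}h_{s,i-1,j}$. *)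

theory Defs
  imports Complex_Main
begin

text \<open>The numbers h_{s,i,j}. All indices j that occur are nonnegative, so j is a natural number.\<close>
fun hcoef :: "nat \<Rightarrow> nat \<Rightarrow> nat \<Rightarrow> real" where
  "hcoef s i j =
     (if j \<le> i then 0
      else if i = 0 then real ((s + j - 1) choose j) * (real s - real j) / real s
      else - ((real s - real j + 1) / real i) * hcoef s (i - 1) (j - 1)
           - ((real j - real i) / real i) * hcoef s (i - 1) j)"

end

theory Submission imports Defs begin

declare hcoef.simps[simp del]

lemma h_zero: "j \<le> i \<Longrightarrow> hcoef s i j = 0"
  by (subst hcoef.simps) simp

lemma h_rec: assumes "i > 0"
  shows "hcoef s i j = - ((real s - real j + 1) / real i) * hcoef s (i - 1) (j - 1)
           - ((real j - real i) / real i) * hcoef s (i - 1) j"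
proof (cases "j \<le> i")
  case True
  have a: "hcoef s (i - 1) (j - 1) = 0" using True by (intro h_zero) linarith
  show ?thesis
  proof (cases "j = i")
    case True thus ?thesis using a h_zero[of j i s] by simp
  next
    case False
    hence "hcoef s (i - 1) j = 0" using \<open>j \<le> i\<close> by (intro h_zero) linarith
    thus ?thesis using a h_zero[of j i s] \<open>j \<le> i\<close> by simp
  qed
next
  case False
  thus ?thesis using assms by (subst hcoef.simps) simp
qed

definition T :: "nat \<Rightarrow> nat \<Rightarrow> real" where "T s i = (\<Sum>j\<le>s. hcoef s i j)"

lemma T_rec: assumes "0 < i" "0 < s"
  shows "real i * T s i = -(real s - real i) * T s (i - 1)"
proof -
  obtain m where m: "s = Suc m" using assms by (cases s) auto
  have "real i * T s i = (\<Sum>j\<le>s. - (real s - real j + 1) * hcoef s (i - 1) (j - 1)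
           - (real j - real i) * hcoef s (i - 1) j)"
    unfolding T_def sum_distrib_left
    by (intro sum.cong refl, subst h_rec[OF assms(1)]) (use assms in \<open>simp add: field_simps\<close>)
  also have "\<dots> = - (\<Sum>j\<le>s. (real s - real j + 1) * hcoef s (i - 1) (j - 1))
           - (\<Sum>j\<le>s. (real j - real i) * hcoef s (i - 1) j)"
    by (simp add: sum_subtractf[symmetric] sum_negf[symmetric] algebra_simps)
  also have "(\<Sum>j\<le>s. (real s - real j + 1) * hcoef s (i - 1) (j - 1))
        = (\<Sum>j\<le>s. (real s - real j) * hcoef s (i - 1) j)"
  proof -
    have "(\<Sum>j\<le>s. (real s - real j + 1) * hcoef s (i - 1) (j - 1))
        = (real s + 1) * hcoef s (i-1) 0 + (\<Sum>j\<le>m. (real s - real (Suc j) + 1) * hcoef s (i - 1) j)"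
      unfolding m by (subst sum.atMost_Suc_shift) simp
    also have "\<dots> = (\<Sum>j\<le>m. (real s - real j) * hcoef s (i - 1) j)"
      using h_zero[of 0 "i-1" s] by simp
    also have "\<dots> = (\<Sum>j\<le>s. (real s - real j) * hcoef s (i - 1) j)"
      unfolding m by (subst sum.atMost_Suc) simp
    finally show ?thesis .
  qed
  finally have "real i * T s i = - (\<Sum>j\<le>s. (real s - real j) * hcoef s (i - 1) j + (real j - real i) * hcoef s (i - 1) j)"
    by (simp add: sum.distrib)
  also have "\<dots> = -(real s - real i) * T s (i - 1)"
    unfolding T_def sum_distrib_left by (simp add: algebra_simps sum_negf[symmetric] sum_subtractf[symmetric])
  finally show ?thesis .
qed

lemma choose_step: "(n choose Suc k) * Suc k = (n choose k) * (n - k)"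
  using binomial_absorption[of k n] binomial_absorb_comp[of n k] by (simp add: mult.commute)

lemma T_closed: assumes "0 < s" shows "i \<le> s - 1 \<Longrightarrow> T s i = (-1)^i * real (s - 1 choose i) * T s 0"
proof (induction i)
  case 0 thus ?case by simp
next
  case (Suc i)
  have e1: "real (s - 1 choose i) * real (s - 1 - i) = real (s - 1 choose Suc i) * real (Suc i)"
    using choose_step[of "s-1" i] by (metis of_nat_mult)
  have e2: "real (s - 1 - i) = real s - real (Suc i)" using Suc.prems by (simp add: of_nat_diff)
  have e3: "real (s - 1 choose i) * (real s - real (Suc i)) = real (s - 1 choose Suc i) * real (Suc i)"
    using e1 e2 by simp
  have "real (Suc i) * T s (Suc i) = -(real s - real (Suc i)) * T s i"
    using T_rec[of "Suc i" s] assms by simp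
  also have "\<dots> = -(real s - real (Suc i)) * ((-1)^i * real (s - 1 choose i) * T s 0)"
    using Suc by simp
  also have "\<dots> = real (Suc i) * ((-1)^(Suc i) * real (s - 1 choose Suc i) * T s 0)"
    using e3 by (simp add: algebra_simps)
  finally have "real (Suc i) * T s (Suc i) = real (Suc i) * ((-1)^(Suc i) * real (s - 1 choose Suc i) * T s 0)" .
  moreover have "real (Suc i) \<noteq> 0" by (simp del: of_nat_Suc)
  ultimately show ?case by (metis mult_left_cancel)
qed


lemma T0: assumes "0 < s" shows "T s 0 = 1 / real s * real ((2*s) choose (s-1)) - 1"
proof -
  obtain m where m: "s = Suc m" using assms by (cases s) auto
  define A where "A = real ((2*s) choose s)"
  define B where "B = real ((2*s) choose (s-1))"
  have h0: "hcoef s 0 j = real (s + j - 1 choose j) * (real s - real j) / real s - (if j = 0 then 1 else 0)" for j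
    using assms by (subst hcoef.simps) auto
  have "T s 0 = (\<Sum>j\<le>s. real (s + j - 1 choose j) * (real s - real j) / real s) - 1"
    unfolding T_def h0 by (simp add: sum_subtractf)
  also have "(\<Sum>j\<le>s. real (s + j - 1 choose j) * (real s - real j) / real s)
     = (real s * (\<Sum>j\<le>s. real (s + j - 1 choose j)) - (\<Sum>j\<le>s. real j * real (s + j - 1 choose j))) / real s"
    by (simp add: sum_divide_distrib[symmetric] sum_distrib_left sum_subtractf[symmetric] algebra_simps)
  also have "(\<Sum>j\<le>s. real (s + j - 1 choose j)) = A"
  proof -
    have "(\<Sum>j\<le>s. (s - 1 + j) choose j) = Suc (s - 1 + s) choose s" by (rule sum_choose_lower)
    moreover have "Suc (s - 1 + s) = 2 * s" "\<And>j. s - 1 + j = s + j - 1" using assms by auto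
    ultimately have "(\<Sum>j\<le>s. (s + j - 1) choose j) = 2 * s choose s" by (simp add: mult_2)
    hence "real (\<Sum>j\<le>s. (s + j - 1) choose j) = real (2 * s choose s)" by (rule arg_cong)
    thus ?thesis unfolding A_def by simp
  qed
  also have "(\<Sum>j\<le>s. real j * real (s + j - 1 choose j)) = real s * B"
  proof -
    have "(\<Sum>j\<le>s. j * (s + j - 1 choose j)) = (\<Sum>j\<le>m. Suc j * (s + j choose Suc j))"
      unfolding m by (subst sum.atMost_Suc_shift) simp
    also have "\<dots> = (\<Sum>j\<le>m. s * (s + j choose j))"
    proof (intro sum.cong refl)
      fix j show "Suc j * (s + j choose Suc j) = s * (s + j choose j)"
        using choose_step[of "s+j" j] by (simp add: mult.commute)
    qed
    also have "\<dots> = s * (Suc (s + m) choose m)" by (simp add: sum_distrib_left[symmetric] sum_choose_lower)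
    finally have X: "(\<Sum>j\<le>s. j * (s + j - 1 choose j)) = s * (Suc (s + m) choose m)" .
    have "Suc (s + m) = 2 * s" "m = s - 1" using m by auto
    hence "(\<Sum>j\<le>s. j * (s + j - 1 choose j)) = s * (2 * s choose (s - 1))" using X by (simp add: mult_2)
    hence "real (\<Sum>j\<le>s. j * (s + j - 1 choose j)) = real (s * (2 * s choose (s - 1)))" by (rule arg_cong)
    thus ?thesis unfolding B_def by simp
  qed
  also have "real s * A = (real s + 1) * B"
  proof -
    have "(2*s choose Suc (s-1)) * Suc (s-1) = (2*s choose (s-1)) * (2*s - (s-1))" by (rule choose_step)
    moreover have "Suc (s-1) = s" "2*s - (s-1) = s + 1" using assms by auto
    ultimately have "(2*s choose s) * s = (2*s choose (s-1)) * (s+1)" by simp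
    hence "real ((2*s choose s) * s) = real ((2*s choose (s-1)) * (s+1))" by simp
    thus ?thesis unfolding A_def B_def by (simp add: algebra_simps)
  qed
  finally show ?thesis using assms unfolding B_def[symmetric] by (simp add: field_simps)
qed


definition G :: "nat \<Rightarrow> nat \<Rightarrow> real" where
  "G m r = (\<Sum>k\<le>m. (-1)^k * real (m choose k) * real k ^ r)"

lemma G_aux: "(b::real) * q = p * d \<Longrightarrow> (-1)^(Suc k) * b * q ^ Suc r = - p * ((-1)^k * d * q ^ r)"
proof -
  assume h: "b * q = p * d"
  have "(-1)^(Suc k) * b * q ^ Suc r = - ((-1)^k * (b * q) * q ^ r)" by (simp add: algebra_simps)
  also have "\<dots> = - p * ((-1)^k * d * q ^ r)" unfolding h by (simp add: algebra_simps)
  finally show ?thesis .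
qed

lemma G_rec: "G (Suc m) (Suc r) = - real (Suc m) * (\<Sum>t\<le>r. real (r choose t) * G m t)"
proof -
  have "G (Suc m) (Suc r) = (\<Sum>k\<le>m. (-1)^(Suc k) * real (Suc m choose Suc k) * real (Suc k) ^ (Suc r))"
    unfolding G_def by (subst sum.atMost_Suc_shift) simp
  also have "\<dots> = (\<Sum>k\<le>m. - real (Suc m) * ((-1)^k * real (m choose k) * real (Suc k) ^ r))"
  proof (intro sum.cong refl)
    fix k
    have "real (Suc m choose Suc k) * real (Suc k) = real (Suc m) * real (m choose k)"
      using Suc_times_binomial_eq[of m k] by (metis of_nat_mult)
    thus "(-1)^(Suc k) * real (Suc m choose Suc k) * real (Suc k) ^ (Suc r)
       = - real (Suc m) * ((-1)^k * real (m choose k) * real (Suc k) ^ r)"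
      by (rule G_aux)
  qed
  also have "\<dots> = - real (Suc m) * (\<Sum>k\<le>m. (-1)^k * real (m choose k) * (\<Sum>t\<le>r. real (r choose t) * real k ^ t))"
  proof -
    have "real (Suc k) ^ r = (\<Sum>t\<le>r. real (r choose t) * real k ^ t)" for k
      using binomial_ring[of "real k" 1 r] by (simp add: add.commute)
    thus ?thesis by (simp add: sum_distrib_left)
  qed
  also have "(\<Sum>k\<le>m. (-1)^k * real (m choose k) * (\<Sum>t\<le>r. real (r choose t) * real k ^ t))
      = (\<Sum>t\<le>r. real (r choose t) * G m t)"
    unfolding G_def sum_distrib_left
    by (subst sum.swap) (simp add: algebra_simps)
  finally show ?thesis .
qed

lemma G_vals: "(\<forall>r<m. G m r = 0) \<and> G m m = (-1)^m * fact m"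
proof (induction m)
  case 0 thus ?case by (simp add: G_def)
next
  case (Suc m)
  have low: "G (Suc m) r = 0" if "r < Suc m" for r
  proof (cases r)
    case 0
    thus ?thesis unfolding G_def using choose_alternating_sum[of "Suc m", where 'a=real] by simp
  next
    case (Suc r')
    hence "\<forall>t\<le>r'. G m t = 0" using Suc.IH that by auto
    thus ?thesis unfolding Suc G_rec by simp
  qed
  have "G (Suc m) (Suc m) = - real (Suc m) * (\<Sum>t\<le>m. real (m choose t) * G m t)"
    by (rule G_rec)
  also have "(\<Sum>t\<le>m. real (m choose t) * G m t) = G m m"
  proof -
    have "(\<Sum>t\<le>m. real (m choose t) * G m t) = (\<Sum>t<m. real (m choose t) * G m t) + G m m"
      by (simp add: lessThan_Suc_atMost[symmetric])
    thus ?thesis using Suc.IH by simp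
  qed
  finally have "G (Suc m) (Suc m) = (-1)^(Suc m) * fact (Suc m)" using Suc.IH by (simp add: algebra_simps)
  thus ?case using low by blast
qed

definition F :: "real \<Rightarrow> nat \<Rightarrow> real \<Rightarrow> nat \<Rightarrow> real" where
  "F lam m a p = (\<Sum>k\<le>m. (-1)^k * real (m choose k) * (a - lam * real k) ^ p)"

lemma F_top: "F lam m a (Suc m) = fact (Suc m) * lam ^ m * a + (- lam) ^ (Suc m) * G m (Suc m)"
proof -
  have exp: "(a - lam * real k) ^ p = (\<Sum>r\<le>p. real (p choose r) * (- lam) ^ r * a ^ (p - r) * real k ^ r)" for k p
  proof -
    have "a - lam * real k = (-lam) * real k + a" by simp
    thus ?thesis by (simp only: binomial_ring power_mult_distrib) (rule sum.cong[OF refl], simp only: mult_ac)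
  qed
  have "F lam m a (Suc m) = (\<Sum>r\<le>Suc m. real (Suc m choose r) * (- lam) ^ r * a ^ (Suc m - r) * G m r)"
    unfolding F_def exp G_def sum_distrib_left
    by (subst sum.swap) (simp add: algebra_simps)
  also have "\<dots> = (\<Sum>r<m. real (Suc m choose r) * (- lam) ^ r * a ^ (Suc m - r) * G m r)
      + real (Suc m) * (- lam) ^ m * a * G m m + (- lam) ^ (Suc m) * G m (Suc m)"
    by (simp add: lessThan_Suc_atMost[symmetric])
  also have "(\<Sum>r<m. real (Suc m choose r) * (- lam) ^ r * a ^ (Suc m - r) * G m r) = 0"
    using G_vals[of m] by simp
  also have "real (Suc m) * (- lam) ^ m * a * G m m = fact (Suc m) * lam ^ m * a"
  proof -
    have "(- lam) ^ m * (-1) ^ m = lam ^ m"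
      by (metis mult.commute mult_minus1 power_minus power_mult_distrib minus_mult_minus mult_1 power_one)
    thus ?thesis using G_vals[of m] by (simp add: algebra_simps)
  qed
  finally show ?thesis by simp
qed


lemma T_part: assumes "i \<le> s" shows "(\<Sum>j = i+1..s. hcoef s i j) = T s i"
  unfolding T_def by (rule sum.mono_neutral_right[symmetric]) (auto intro: h_zero)

lemma rev_sum: "(k::nat) \<le> s \<Longrightarrow> (\<Sum>j'=0..k. f (s - j')) = (\<Sum>j=s-k..s. (f j :: real))"
  by (rule sum.reindex_bij_witness[of _ "\<lambda>j. s - j" "\<lambda>j. s - j"]) auto

lemma sign_lemma: assumes "k \<le> m"
  shows "(-1::real)^(Suc m) * (-1)^(m-k) = - ((-1)^k)"
  using assms by (auto simp: minus_one_power_iff)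


lemma sign_mult: "(a::real) * b = - d \<Longrightarrow> a * x * (b * y * z) = - (d * y * x * z)"
proof -
  assume h: "a * b = - d"
  have "a * x * (b * y * z) = (a * b) * (y * x * z)" by (simp only: mult_ac)
  thus ?thesis using h by simp
qed

theorem proposition12:
  fixes s :: nat and lambda eta n :: real and c :: "real \<Rightarrow> real"
  assumes "s > 0"
    and "\<And>x. c x = lambda * x + eta"
  shows "(\<Sum>i = 0..s-1. c (n - real i) ^ s * (\<Sum>j' = i+1..s. hcoef s i j'))
       + (\<Sum>i = s+1..2*s. (-1) ^ s * c (n - real i) ^ s
            * (\<Sum>j' = 0..i-s-1. hcoef s (2*s - i) (s - j')))
       = (1 / real s * real ((2*s) choose (s-1)) - 1) * lambda ^ s * fact (s+1)"
proof -
  obtain m where m: "s = Suc m" using assms(1) by (cases s) auto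
  define T0 where "T0 = T s 0"
  have cshift: "c (x - real k) = c x - lambda * real k" for x k using assms(2) by (simp add: algebra_simps)
  have first: "(\<Sum>i = 0..s-1. c (n - real i) ^ s * (\<Sum>j' = i+1..s. hcoef s i j'))
      = T0 * F lambda m (c n) s"
  proof -
    have "(\<Sum>i = 0..s-1. c (n - real i) ^ s * (\<Sum>j' = i+1..s. hcoef s i j'))
        = (\<Sum>i\<le>m. c (n - real i) ^ s * ((-1)^i * real (m choose i) * T0))"
      unfolding m atMost_atLeast0 T0_def diff_Suc_1
    proof (intro sum.cong refl)
      fix i assume "i \<in> {0..m}"
      hence i: "i \<le> m" by simp
      have "(\<Sum>j' = i+1..Suc m. hcoef (Suc m) i j') = T (Suc m) i" using i by (intro T_part) simp
      also have "\<dots> = (-1)^i * real (m choose i) * T (Suc m) 0" using T_closed[of "Suc m" i] i by simp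
      finally show "c (n - real i) ^ Suc m * (\<Sum>j' = i+1..Suc m. hcoef (Suc m) i j')
          = c (n - real i) ^ Suc m * ((-1)^i * real (m choose i) * T (Suc m) 0)" by simp
    qed
    also have "\<dots> = T0 * F lambda m (c n) s"
      unfolding F_def sum_distrib_left cshift by (intro sum.cong refl) (simp add: algebra_simps)
    finally show ?thesis .
  qed
  have second: "(\<Sum>i = s+1..2*s. (-1) ^ s * c (n - real i) ^ s
            * (\<Sum>j' = 0..i-s-1. hcoef s (2*s - i) (s - j'))) = - (T0 * F lambda m (c (n - real (s+1))) s)"
  proof -
    have "(\<Sum>i = s+1..2*s. (-1) ^ s * c (n - real i) ^ s
            * (\<Sum>j' = 0..i-s-1. hcoef s (2*s - i) (s - j')))
        = (\<Sum>k\<le>m. (-1) ^ s * c (n - real (k+s+1)) ^ s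
            * (\<Sum>j' = 0..(k+s+1)-s-1. hcoef s (2*s - (k+s+1)) (s - j')))"
      by (rule sum.reindex_bij_witness[of _ "\<lambda>k. k+s+1" "\<lambda>i. i-s-1"]) (auto simp: m)
    also have "\<dots> = (\<Sum>k\<le>m. - ((-1)^k * real (m choose k) * (c (n - real (s+1)) - lambda * real k) ^ s * T0))"
    proof (intro sum.cong refl)
      fix k assume k: "k \<in> {..m}"
      hence km: "k \<le> m" by simp
      have idx: "(k+s+1)-s-1 = k" "2*s - (k+s+1) = m - k" using m by auto
      have inner: "(\<Sum>j' = 0..k. hcoef s (m - k) (s - j')) = T s (m - k)"
      proof -
        have "(\<Sum>j' = 0..k. hcoef s (m - k) (s - j')) = (\<Sum>j = s-k..s. hcoef s (m - k) j)"
          by (rule rev_sum) (use km m in simp)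
        also have "s - k = (m - k) + 1" using km m by simp
        also have "(\<Sum>j = (m-k)+1..s. hcoef s (m - k) j) = T s (m - k)"
          by (rule T_part) (use m in simp)
        finally show ?thesis .
      qed
      have Tv: "T s (m - k) = (-1)^(m-k) * real (m choose k) * T0"
        using T_closed[of s "m - k"] m km binomial_symmetric[OF km] unfolding T0_def by simp
      have sg: "(-1::real)^s * (-1)^(m-k) = -((-1)^k)" using sign_lemma[OF km] m by simp
      have cv: "c (n - real (k+s+1)) = c (n - real (s+1)) - lambda * real k"
        using cshift[of "n - real (s+1)" k] by (simp add: algebra_simps)
      show "(-1) ^ s * c (n - real (k+s+1)) ^ s
            * (\<Sum>j' = 0..(k+s+1)-s-1. hcoef s (2*s - (k+s+1)) (s - j'))
          = - ((-1)^k * real (m choose k) * (c (n - real (s+1)) - lambda * real k) ^ s * T0)"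
        unfolding idx inner Tv cv
        by (rule sign_mult[OF sg])
    qed
    also have "\<dots> = - (T0 * F lambda m (c (n - real (s+1))) s)"
      unfolding F_def sum_distrib_left sum_negf by (intro arg_cong[where f=uminus] sum.cong refl) (simp add: algebra_simps)
    finally show ?thesis .
  qed
  have Fdiff: "F lambda m (c n) s - F lambda m (c (n - real (s+1))) s = lambda ^ s * fact (s+1) / 1"
  proof -
    have "F lambda m (c n) s - F lambda m (c (n - real (s+1))) s
        = fact (Suc m) * lambda ^ m * (c n - c (n - real (s+1)))"
      unfolding m F_top by (simp add: algebra_simps)
    also have "c n - c (n - real (s+1)) = lambda * real (s+1)" using cshift[of n "s+1"] by simp
    finally show ?thesis unfolding m by (simp add: algebra_simps)
  qed
  have "T0 * F lambda m (c n) s + - (T0 * F lambda m (c (n - real (s+1))) s)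
      = T0 * (F lambda m (c n) s - F lambda m (c (n - real (s+1))) s)" by (simp add: algebra_simps)
  also have "\<dots> = T0 * (lambda ^ s * fact (s+1))" using Fdiff by simp
  also have "\<dots> = (1 / real s * real ((2*s) choose (s-1)) - 1) * lambda ^ s * fact (s+1)"
    using T0[OF assms(1)] unfolding T0_def[symmetric] by simp
  finally show ?thesis unfolding first second .
qed

end
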